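(* Let $0<e_0\le 1$ be a constant. If an algorithm is an $\alpha$-approximation algorithm for the classical problem $P_m\mid\mid C_{\max}$, then using the schedule it produces (the same assignment of jobs to machines and the same order of jobs on each machine, processed without unnecessary idle time) yields an $\tfrac{\alpha}{e_0}$-approximation algorithm for $P_m, e_{i,k}\ge e_0\mid\mid C_{\max}$.
   Context: Shared-processing parallel machine scheduling: there are $m$ identical machines $M_1,\dots,M_m$ and $n$ primary jobs, all available at time $0$, job $j$ having processing time $p_j>0$. Each job is processed by exactly one machine without interruption; each machine processes its jobs one after another. The time axis of machine $M_i$ is partitioned into consecutive intervals $(0,t_{i,1}],(t_{i,1},t_{i,2}],\dots$ with sharing ratios $e_{i,k}\in(0,1]$; during the $k$-th interval $M_i$ processes primary work at rate $e_{i,k}$ (so a job of length $p$ started at time $s$ completes at the earliest $C$ with $\int_s^C(\text{rate of }M_i)\,dt=p$). The makespan is $C_{\max}=\max_j C_j$. $P_m, e_{i,k}\ge e_0\mid\mid C_{\max}$ denotes makespan minimization when all sharing ratios on all machines satisfy $e_{i,k}\ge e_0$. $P_m\mid\mid C_{\max}$ is the classical problem where all ratios equal $1$. *)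

theory Defs
  imports "HOL-Analysis.Analysis"
begin

text \<open>Jobs are the indices 0..<length ps of a list ps of processing times.  A sharing profile for machine i is given by breakpoints
  t i 0 = 0 < t i 1 < t i 2 < ... (unbounded) and ratios e i k; during the interval
  (t i k, t i (Suc k)] machine i processes primary work at rate e i k.\<close>

definition valid_profile :: "nat \<Rightarrow> real \<Rightarrow> (nat \<Rightarrow> nat \<Rightarrow> real) \<Rightarrow> (nat \<Rightarrow> nat \<Rightarrow> real) \<Rightarrow> bool" where
  "valid_profile m e0 t e \<longleftrightarrow>
     (\<forall>i<m. t i 0 = 0 \<and> strict_mono (t i) \<and> (\<forall>B. \<exists>k. B < t i k)
            \<and> (\<forall>k. e0 \<le> e i k \<and> e i k \<le> 1 \<and> 0 < e i k))"

definition rate :: "(nat \<Rightarrow> nat \<Rightarrow> real) \<Rightarrow> (nat \<Rightarrow> nat \<Rightarrow> real) \<Rightarrow> nat \<Rightarrow> real \<Rightarrow> real" where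
  "rate t e i x = e i (LEAST k. x \<le> t i (Suc k))"

text \<open>Completion times of a sequence of jobs (processing time, idle time inserted
  before the job) processed one after another on a machine with rate function r,
  starting at time s: a job of length p started at time a completes at the earliest
  C with integral of r over [a,C] equal to p.\<close>
fun ctimes :: "(real \<Rightarrow> real) \<Rightarrow> real \<Rightarrow> (real \<times> real) list \<Rightarrow> real list" where
  "ctimes r s [] = []"
| "ctimes r s ((p, d) # rest) =
     (let a = s + d; C = Inf {C. a \<le> C \<and> integral {a..C} r = p} in C # ctimes r C rest)"

text \<open>A schedule: for each machine the list of (job, idle time before the job),
  in processing order.\<close>
definition valid_sched :: "nat \<Rightarrow> nat \<Rightarrow> (nat \<times> real) list list \<Rightarrow> bool" where
  "valid_sched m n \<sigma> \<longleftrightarrow> length \<sigma> = m \<and> distinct (map fst (concat \<sigma>))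
     \<and> set (map fst (concat \<sigma>)) = {..<n} \<and> (\<forall>x\<in>set (concat \<sigma>). 0 \<le> snd x)"

definition makespan :: "real list \<Rightarrow> (nat \<Rightarrow> real \<Rightarrow> real) \<Rightarrow> (nat \<times> real) list list \<Rightarrow> real" where
  "makespan ps R \<sigma> =
     Max ({0} \<union> (\<Union>i<length \<sigma>. set (ctimes (R i) 0 (map (\<lambda>(j, d). (ps ! j, d)) (\<sigma> ! i)))))"

definition opt :: "nat \<Rightarrow> real list \<Rightarrow> (nat \<Rightarrow> real \<Rightarrow> real) \<Rightarrow> real" where
  "opt m ps R = Inf {makespan ps R \<sigma> | \<sigma>. valid_sched m (length ps) \<sigma>}"

definition nodelay :: "nat list list \<Rightarrow> (nat \<times> real) list list" where
  "nodelay A = map (map (\<lambda>j. (j, 0))) A"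

definition unit_rate :: "nat \<Rightarrow> real \<Rightarrow> real" where
  "unit_rate i x = 1"

end

theory Submission
  imports Defs
begin

definition good :: "real \<Rightarrow> (real \<Rightarrow> real) \<Rightarrow> bool" where
  "good e0 r \<longleftrightarrow> (\<forall>x. e0 \<le> r x \<and> r x \<le> 1) \<and> (\<forall>a b. 0 \<le> a \<longrightarrow> r integrable_on {a..b})"

lemma rate_good:
  assumes vp: "valid_profile m e0 t e" and i: "i < m"
  shows "good e0 (rate t e i)"
proof -
  let ?T = "t i"
  have T0: "?T 0 = 0" and sm: "strict_mono ?T" and unb: "\<And>B. \<exists>k. B < ?T k"
    and ek: "\<And>k. e0 \<le> e i k \<and> e i k \<le> 1"
    using vp i unfolding valid_profile_def by auto
  have bnd: "\<forall>x. e0 \<le> rate t e i x \<and> rate t e i x \<le> 1"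
    unfolding rate_def using ek by auto
  have piece: "rate t e i x = e i K" if "?T K < x" "x \<le> ?T (Suc K)" for x K
  proof -
    have "(LEAST k. x \<le> ?T (Suc k)) = K"
    proof (rule Least_equality)
      show "x \<le> ?T (Suc K)" by fact
      fix k assume "x \<le> ?T (Suc k)"
      show "K \<le> k"
      proof (rule ccontr)
        assume "\<not> K \<le> k"
        then have "Suc k \<le> K" by simp
        then have "?T (Suc k) \<le> ?T K" using sm by (simp add: strict_mono_less_eq)
        with that \<open>x \<le> ?T (Suc k)\<close> show False by simp
      qed
    qed
    then show ?thesis unfolding rate_def by simp
  qed
  have pint: "rate t e i integrable_on {?T K..?T (Suc K)}" for K
  proof (rule integrable_spike_finite[where S="{?T K}" and f="\<lambda>x. e i K"])
    show "finite {?T K}" by simp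
    fix x assume "x \<in> {?T K..?T (Suc K)} - {?T K}"
    then show "rate t e i x = e i K" using piece by auto
  qed auto
  have ind: "rate t e i integrable_on {0..?T K}" for K
  proof (induction K)
    case 0
    then show ?case using T0 integrable_on_refl[of "rate t e i" "0::real"] by simp
  next
    case (Suc K)
    have "0 \<le> ?T K" using T0 sm by (metis le0 strict_mono_less_eq)
    moreover have "?T K \<le> ?T (Suc K)" using sm by (simp add: strict_mono_less_eq)
    ultimately show ?case using Henstock_Kurzweil_Integration.integrable_combine[OF _ _ Suc pint[of K]] T0 by simp
  qed
  have "rate t e i integrable_on {a..b}" if "0 \<le> a" for a b
  proof (cases "b < a")
    case True
    then show ?thesis by (simp add: integrable_on_empty)
  next
    case False
    obtain K where "b < ?T K" using unb by blast
    then have "{a..b} \<subseteq> {0..?T K}" using that by auto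
    then show ?thesis using ind integrable_subinterval_real by blast
  qed
  then show ?thesis using bnd unfolding good_def by blast
qed

lemma step_bounds:
  assumes g: "good e0 r" and e0: "0 < e0" and a: "0 \<le> a" and p: "0 < p"
  shows "a + p \<le> Inf {C. a \<le> C \<and> integral {a..C} r = p}"
    and "Inf {C. a \<le> C \<and> integral {a..C} r = p} \<le> a + p / e0"
proof -
  let ?S = "{C. a \<le> C \<and> integral {a..C} r = p}"
  have bnd: "\<And>x. e0 \<le> r x \<and> r x \<le> 1" and int: "\<And>b. r integrable_on {a..b}"
    using g a unfolding good_def by auto
  have lo: "e0 * (C - a) \<le> integral {a..C} r" and up: "integral {a..C} r \<le> C - a"
    if "a \<le> C" for C
  proof -
    have "integral {a..C} (\<lambda>x. e0) \<le> integral {a..C} r"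
      by (rule integral_le) (use int bnd in auto)
    then show "e0 * (C - a) \<le> integral {a..C} r" using that by (simp add: mult.commute)
    have "integral {a..C} r \<le> integral {a..C} (\<lambda>x. 1)"
      by (rule integral_le) (use int bnd in auto)
    then show "integral {a..C} r \<le> C - a" using that by simp
  qed
  define b where "b = a + p / e0"
  have ab: "a \<le> b" using p e0 by (simp add: b_def)
  have "p \<le> integral {a..b} r"
    using lo[OF ab] e0 by (simp add: b_def)
  moreover have "integral {a..a} r \<le> p" using p by simp
  moreover have "continuous_on {a..b} (\<lambda>x. integral {a..x} r)"
    by (rule indefinite_integral_continuous_1[OF int])
  ultimately obtain C where C: "a \<le> C" "C \<le> b" "integral {a..C} r = p"
    using IVT'[of "\<lambda>x. integral {a..x} r" a p b] ab by blast
  then have CS: "C \<in> ?S" by simp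
  have bdd: "bdd_below ?S" by (rule bdd_belowI[of _ a]) simp
  show "Inf ?S \<le> a + p / e0"
    using cInf_lower[OF CS bdd] C b_def by simp
  show "a + p \<le> Inf ?S"
  proof (rule cInf_greatest)
    show "?S \<noteq> {}" using CS by blast
    fix x assume "x \<in> ?S"
    then show "a + p \<le> x" using up[of x] by simp
  qed
qed

lemma unit_step:
  assumes "0 \<le> (p::real)"
  shows "Inf {C. a \<le> C \<and> integral {a..C} (unit_rate i) = p} = a + p"
proof -
  have "unit_rate i = (\<lambda>x. 1)" by (simp add: unit_rate_def fun_eq_iff)
  then have "{C. a \<le> C \<and> integral {a..C} (unit_rate i) = p} = {a + p}"
    using assms by auto
  then show ?thesis by simp
qed


lemma ctimes_A:
  assumes g: "good e0 r" and e0: "0 < e0"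
  shows "(\<forall>(p,d)\<in>set ys. 0 < p \<and> d = 0) \<Longrightarrow> 0 \<le> s \<Longrightarrow> s \<le> s' / e0 \<Longrightarrow>
    \<forall>c\<in>set (ctimes r s ys). \<exists>u\<in>set (ctimes (unit_rate i) s' ys). c \<le> u / e0"
proof (induction ys arbitrary: s s')
  case Nil
  then show ?case by simp
next
  case (Cons pd ys)
  obtain p d where pd: "pd = (p, d)" by fastforce
  have p: "0 < p" and d: "d = 0" using Cons.prems(1) pd by auto
  define C where "C = Inf {C. s + d \<le> C \<and> integral {s + d..C} r = p}"
  define U where "U = Inf {C. s' + d \<le> C \<and> integral {s' + d..C} (unit_rate i) = p}"
  have C1: "s + p \<le> C" and C2: "C \<le> s + p / e0"
    using step_bounds[OF g e0 _ p, of s] Cons.prems d by (auto simp: C_def)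
  have U: "U = s' + p" using unit_step[of p s' i] p d by (simp add: U_def)
  have CU: "C \<le> U / e0" using C2 U Cons.prems(3) e0 by (simp add: add_divide_distrib)
  have IH: "\<forall>c\<in>set (ctimes r C ys). \<exists>u\<in>set (ctimes (unit_rate i) U ys). c \<le> u / e0"
    using Cons.IH[of C U] Cons.prems C1 p CU by auto
  have eq1: "ctimes r s (pd # ys) = C # ctimes r C ys" by (simp add: pd C_def Let_def)
  have eq2: "ctimes (unit_rate i) s' (pd # ys) = U # ctimes (unit_rate i) U ys"
    by (simp add: pd U_def Let_def)
  show ?case unfolding eq1 eq2 using IH CU by auto
qed

lemma ctimes_B:
  assumes g: "good e0 r" and e0: "0 < e0"
  shows "(\<forall>(p,d)\<in>set ys. 0 < p \<and> 0 \<le> d) \<Longrightarrow> 0 \<le> s \<Longrightarrow> s' \<le> s \<Longrightarrow>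
    \<forall>u\<in>set (ctimes (unit_rate i) s' ys). \<exists>c\<in>set (ctimes r s ys). u \<le> c"
proof (induction ys arbitrary: s s')
  case Nil
  then show ?case by simp
next
  case (Cons pd ys)
  obtain p d where pd: "pd = (p, d)" by fastforce
  have p: "0 < p" and d: "0 \<le> d" using Cons.prems(1) pd by auto
  define C where "C = Inf {C. s + d \<le> C \<and> integral {s + d..C} r = p}"
  define U where "U = Inf {C. s' + d \<le> C \<and> integral {s' + d..C} (unit_rate i) = p}"
  have C1: "s + d + p \<le> C"
    using step_bounds[OF g e0 _ p, of "s + d"] Cons.prems d by (auto simp: C_def)
  have U: "U = s' + d + p" using unit_step[of p "s' + d" i] p by (simp add: U_def)
  have CU: "U \<le> C" using C1 U Cons.prems(3) by simp
  have IH: "\<forall>u\<in>set (ctimes (unit_rate i) U ys). \<exists>c\<in>set (ctimes r C ys). u \<le> c"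
    using Cons.IH[of C U] Cons.prems C1 p d CU by auto
  have eq1: "ctimes r s (pd # ys) = C # ctimes r C ys" by (simp add: pd C_def Let_def)
  have eq2: "ctimes (unit_rate i) s' (pd # ys) = U # ctimes (unit_rate i) U ys"
    by (simp add: pd U_def Let_def)
  show ?case unfolding eq1 eq2 using IH CU by auto
qed

lemma mk_finite: "finite ({0} \<union> (\<Union>i<length \<sigma>. set (ctimes (R i) 0 (map (\<lambda>(j, d). (ps ! j, d)) (\<sigma> ! i)))))"
  by auto

lemma mk_nonneg: "0 \<le> makespan ps R \<sigma>"
  unfolding makespan_def using mk_finite by (intro Max_ge) auto

lemma mk_ge: "i < length \<sigma> \<Longrightarrow> x \<in> set (ctimes (R i) 0 (map (\<lambda>(j, d). (ps ! j, d)) (\<sigma> ! i)))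
   \<Longrightarrow> x \<le> makespan ps R \<sigma>"
  unfolding makespan_def using mk_finite by (intro Max_ge) auto

lemma mk_le:
  assumes "\<And>i x. i < length \<sigma> \<Longrightarrow> x \<in> set (ctimes (R i) 0 (map (\<lambda>(j, d). (ps ! j, d)) (\<sigma> ! i))) \<Longrightarrow> x \<le> B"
    and "0 \<le> B"
  shows "makespan ps R \<sigma> \<le> B"
  unfolding makespan_def using mk_finite assms by (intro Max.boundedI) auto

lemma valid_jobs:
  assumes "valid_sched m (length ps) \<sigma>" "\<forall>p\<in>set ps. 0 < p" "i < length \<sigma>"
  shows "\<forall>(p,d)\<in>set (map (\<lambda>(j, d). (ps ! j, d)) (\<sigma> ! i)). 0 < p \<and> 0 \<le> d"
proof (clarsimp)
  fix j d assume jd: "(j, d) \<in> set (\<sigma> ! i)"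
  then have "(j, d) \<in> set (concat \<sigma>)" using assms(3) by auto
  then have "j \<in> set (map fst (concat \<sigma>))" "0 \<le> d" using assms(1) unfolding valid_sched_def
    by (force, force)
  then have "j < length ps" using assms(1) unfolding valid_sched_def by auto
  then show "0 < ps ! j \<and> 0 \<le> d" using assms(2) \<open>0 \<le> d\<close> by auto
qed

lemma nodelay_jobs:
  assumes "i < length A"
  shows "\<forall>(p,d)\<in>set (map (\<lambda>(j, d). (ps ! j, d)) (nodelay A ! i)). d = 0"
  using assms by (auto simp: nodelay_def)


theorem mainTheorem2:
  fixes m :: nat and e0 \<alpha> :: real and alg :: "real list \<Rightarrow> nat list list"
  assumes "m \<ge> 1" and "0 < e0" and "e0 \<le> 1"
    and approx: "\<forall>ps. (\<forall>p\<in>set ps. 0 < p) \<longrightarrow>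
        valid_sched m (length ps) (nodelay (alg ps)) \<and>
        makespan ps unit_rate (nodelay (alg ps)) \<le> \<alpha> * opt m ps unit_rate"
  shows "\<forall>ps t e. (\<forall>p\<in>set ps. 0 < p) \<longrightarrow> valid_profile m e0 t e \<longrightarrow>
        makespan ps (rate t e) (nodelay (alg ps)) \<le> (\<alpha> / e0) * opt m ps (rate t e)"
proof (intro allI impI)
  fix ps :: "real list" and t e :: "nat \<Rightarrow> nat \<Rightarrow> real"
  assume pos: "\<forall>p\<in>set ps. 0 < p" and vp: "valid_profile m e0 t e"
  have e0: "0 < e0" by fact
  define \<sigma> where "\<sigma> = nodelay (alg ps)"
  have v\<sigma>: "valid_sched m (length ps) \<sigma>" and hu: "makespan ps unit_rate \<sigma> \<le> \<alpha> * opt m ps unit_rate"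
    using approx pos unfolding \<sigma>_def by auto
  have len: "length \<sigma>' = m" if "valid_sched m (length ps) \<sigma>'" for \<sigma>'
    using that unfolding valid_sched_def by auto
  have goodi: "good e0 (rate t e i)" if "i < m" for i
    using rate_good[OF vp that] .
  have key1: "makespan ps (rate t e) \<sigma> \<le> makespan ps unit_rate \<sigma> / e0"
  proof (rule mk_le)
    show "0 \<le> makespan ps unit_rate \<sigma> / e0" using mk_nonneg e0 by simp
    fix i x assume i: "i < length \<sigma>"
      and x: "x \<in> set (ctimes (rate t e i) 0 (map (\<lambda>(j, d). (ps ! j, d)) (\<sigma> ! i)))"
    have im: "i < m" using i len[OF v\<sigma>] by simp
    have ia: "i < length (alg ps)" using i by (simp add: \<sigma>_def nodelay_def)
    have jobs: "\<forall>(p,d)\<in>set (map (\<lambda>(j, d). (ps ! j, d)) (\<sigma> ! i)). 0 < p \<and> d = 0"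
      using valid_jobs[OF v\<sigma> pos i] nodelay_jobs[OF ia, of ps] unfolding \<sigma>_def by fastforce
    obtain u where u: "u \<in> set (ctimes (unit_rate i) 0 (map (\<lambda>(j, d). (ps ! j, d)) (\<sigma> ! i)))"
      and xu: "x \<le> u / e0"
      using ctimes_A[OF goodi[OF im] e0, of "map (\<lambda>(j, d). (ps ! j, d)) (\<sigma> ! i)" 0 0 i] jobs x
      by fastforce
    have "u \<le> makespan ps unit_rate \<sigma>" using mk_ge[where R=unit_rate, OF i u] .
    then have "u / e0 \<le> makespan ps unit_rate \<sigma> / e0" using e0 by (simp add: divide_right_mono)
    then show "x \<le> makespan ps unit_rate \<sigma> / e0" using xu by simp
  qed
  have key2: "makespan ps unit_rate \<sigma>' \<le> makespan ps (rate t e) \<sigma>'"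
    if v: "valid_sched m (length ps) \<sigma>'" for \<sigma>'
  proof (rule mk_le)
    show "0 \<le> makespan ps (rate t e) \<sigma>'" by (rule mk_nonneg)
    fix i x assume i: "i < length \<sigma>'"
      and x: "x \<in> set (ctimes (unit_rate i) 0 (map (\<lambda>(j, d). (ps ! j, d)) (\<sigma>' ! i)))"
    have im: "i < m" using i len[OF v] by simp
    obtain c where c: "c \<in> set (ctimes (rate t e i) 0 (map (\<lambda>(j, d). (ps ! j, d)) (\<sigma>' ! i)))"
      and xc: "x \<le> c"
      using ctimes_B[OF goodi[OF im] e0, of "map (\<lambda>(j, d). (ps ! j, d)) (\<sigma>' ! i)" 0 0 i]
        valid_jobs[OF v pos i] x by fastforce
    show "x \<le> makespan ps (rate t e) \<sigma>'" using mk_ge[where R="rate t e", OF i c] xc by simp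
  qed
  let ?U = "{makespan ps unit_rate \<sigma>' | \<sigma>'. valid_sched m (length ps) \<sigma>'}"
  let ?R = "{makespan ps (rate t e) \<sigma>' | \<sigma>'. valid_sched m (length ps) \<sigma>'}"
  have bddU: "bdd_below ?U" by (rule bdd_belowI[of _ 0]) (auto intro: mk_nonneg)
  have bddR: "bdd_below ?R" by (rule bdd_belowI[of _ 0]) (auto intro: mk_nonneg)
  have neU: "?U \<noteq> {}" and neR: "?R \<noteq> {}" using v\<sigma> by auto
  have optU0: "0 \<le> opt m ps unit_rate" unfolding opt_def
    by (rule cInf_greatest[OF neU]) (auto intro: mk_nonneg)
  have optR0: "0 \<le> opt m ps (rate t e)" unfolding opt_def
    by (rule cInf_greatest[OF neR]) (auto intro: mk_nonneg)
  have optUR: "opt m ps unit_rate \<le> opt m ps (rate t e)" unfolding opt_def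
  proof (rule cInf_greatest[OF neR])
    fix x assume "x \<in> ?R"
    then obtain \<sigma>' where v: "valid_sched m (length ps) \<sigma>'" and x: "x = makespan ps (rate t e) \<sigma>'"
      by blast
    have "Inf ?U \<le> makespan ps unit_rate \<sigma>'" by (rule cInf_lower[OF _ bddU]) (use v in blast)
    then show "Inf ?U \<le> x" using key2[OF v] x by simp
  qed
  have optRs: "opt m ps (rate t e) \<le> makespan ps (rate t e) \<sigma>" unfolding opt_def
    by (rule cInf_lower[OF _ bddR]) (use v\<sigma> in blast)
  show "makespan ps (rate t e) (nodelay (alg ps)) \<le> (\<alpha> / e0) * opt m ps (rate t e)"
  proof (cases "0 \<le> \<alpha>")
    case True
    have "makespan ps (rate t e) \<sigma> \<le> makespan ps unit_rate \<sigma> / e0" by (rule key1)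
    also have "\<dots> \<le> \<alpha> * opt m ps unit_rate / e0" using hu e0 by (simp add: divide_right_mono)
    also have "\<dots> \<le> \<alpha> * opt m ps (rate t e) / e0"
      using optUR True e0 by (simp add: divide_right_mono mult_left_mono)
    finally show ?thesis by (simp add: \<sigma>_def)
  next
    case False
    have "\<alpha> * opt m ps unit_rate \<le> 0" using False optU0 by (simp add: mult_nonpos_nonneg)
    then have "makespan ps unit_rate \<sigma> \<le> 0" using hu by simp
    then have "makespan ps (rate t e) \<sigma> \<le> 0" using key1 e0
      by (smt (verit) divide_nonpos_pos)
    then have z: "makespan ps (rate t e) \<sigma> = 0" using mk_nonneg[of ps "rate t e" \<sigma>] by simp
    then have "opt m ps (rate t e) = 0" using optRs optR0 by simp
    then show ?thesis using z by (simp add: \<sigma>_def)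
  qed
qed

end
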